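(* Let $p\geq 5$ be an integer and let $(m_n)$ be the metallic numbers defined by $m_{-1}=0$, $m_0=1$, $m_{n+2}=(p-2)m_{n+1}-m_n$. Then every positive integer $n$ can be written as $$n=\sum_{i=0}^{k} a_i\,m_i$$ for some $k\geq 0$ and digits $a_i\in\{1,2,\dots,p-2\}$ for all $i\in\{0,\dots,k\}$.
   Context: $p\ge 5$ is a fixed integer. The metallic numbers are $m_{-1}=0$, $m_0=1$, $m_{n+2}=(p-2)m_{n+1}-m_n$ for $n\ge -1$ (so $m_1=p-2$). *)

theory Defs
  imports Main
begin

text \<open>Metallic numbers: metallic p n = m_n for n >= 0, where m_{-1} = 0, m_0 = 1,
  m_{n+2} = (p-2) m_{n+1} - m_n. Thus m_1 = (p-2) m_0 - m_{-1} = p - 2.\<close>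
fun metallic :: "int \<Rightarrow> nat \<Rightarrow> int" where
  "metallic p 0 = 1"
| "metallic p (Suc 0) = p - 2"
| "metallic p (Suc (Suc n)) = (p - 2) * metallic p (Suc n) - metallic p n"

end

theory Submission
  imports Defs
begin

lemma met_pos: assumes "p \<ge> 5" shows "metallic p k \<ge> 1 \<and> metallic p (Suc k) \<ge> metallic p k"
proof (induction k rule: nat.induct)
  case zero then show ?case using assms by simp
next
  case (Suc k)
  have "(p-2) * metallic p (Suc k) \<ge> 3 * metallic p (Suc k)"
    using Suc assms by (intro mult_right_mono) auto
  moreover have "metallic p (Suc (Suc k)) = (p-2) * metallic p (Suc k) - metallic p k" by simp
  ultimately show ?case using Suc by linarith
qed

lemma met_le: assumes "p \<ge> 5" shows "metallic p (Suc k) \<le> (p-2) * metallic p k"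
proof (cases k)
  case 0 then show ?thesis by simp
next
  case (Suc j) then show ?thesis using met_pos[OF assms, of j] by simp
qed

lemma key: assumes "p \<ge> 5"
  shows "metallic p (Suc k) \<le> (p-3) * (\<Sum>i=0..k. metallic p i) + 1"
proof (cases k)
  case 0 then show ?thesis by simp
next
  case (Suc j)
  have s: "(\<Sum>i=0..k. metallic p i) \<ge> metallic p j + metallic p (Suc j)"
  proof -
    have "(\<Sum>i=0..k. metallic p i) = (\<Sum>i=0..j. metallic p i) + metallic p (Suc j)"
      using Suc by simp
    moreover have "(\<Sum>i=0..j. metallic p i) \<ge> metallic p j"
      using met_pos[OF assms] by (intro member_le_sum) (auto intro: order_trans[OF zero_le_one])
    ultimately show ?thesis by simp
  qed
  have "(p-3) * (\<Sum>i=0..k. metallic p i) \<ge> (p-3) * (metallic p j + metallic p (Suc j))"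
    using s assms by (intro mult_left_mono) auto
  moreover have "metallic p (Suc j) \<le> (p-2) * metallic p j" by (rule met_le[OF assms])
  moreover have "metallic p (Suc k) = (p-2) * metallic p (Suc j) - metallic p j" using Suc by simp
  ultimately show ?thesis by (simp add: algebra_simps)
qed

lemma digit:
  fixes n L U m q :: int
  assumes "m > 0" "q \<ge> 1" "m \<le> U - L + 1" "L + m \<le> n" "n \<le> U + q * m"
  shows "\<exists>a. 1 \<le> a \<and> a \<le> q \<and> L \<le> n - a * m \<and> n - a * m \<le> U"
proof (cases "n - q * m \<ge> L")
  case True then show ?thesis using assms by auto
next
  case False
  define d where "d = (n - L) div m"
  have e: "(n - L) = d * m + (n - L) mod m" unfolding d_def by simp
  have r: "0 \<le> (n - L) mod m" "(n - L) mod m < m" using assms by auto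
  have "d \<ge> 1"
  proof (rule ccontr)
    assume "\<not> d \<ge> 1" then have "d * m \<le> 0 * m" using assms by (intro mult_right_mono) auto
    then show False using e r assms by simp
  qed
  moreover have "d \<le> q"
  proof (rule ccontr)
    assume "\<not> d \<le> q" then have "d * m \<ge> (q+1) * m" using assms by (intro mult_right_mono) auto
    then have "d * m \<ge> q * m + m" by (simp add: algebra_simps)
    then show False using e r False by linarith
  qed
  ultimately show ?thesis using e r assms by (intro exI[of _ d]) linarith
qed

lemma interval:
  assumes "p \<ge> 5"
  shows "(\<Sum>i=0..k. metallic p i) \<le> n \<Longrightarrow> n \<le> (p-2) * (\<Sum>i=0..k. metallic p i) \<Longrightarrow>
    \<exists>a::nat \<Rightarrow> int. (\<forall>i\<in>{0..k}. a i \<in> {1..p-2}) \<and> n = (\<Sum>i=0..k. a i * metallic p i)"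
proof (induction k arbitrary: n)
  case 0 then show ?case by (intro exI[of _ "\<lambda>_. n"]) auto
next
  case (Suc k)
  let ?L = "\<Sum>i=0..k. metallic p i"
  let ?m = "metallic p (Suc k)"
  have mp: "?m > 0" using met_pos[OF assms, of "Suc k"] by simp
  have "\<exists>d. 1 \<le> d \<and> d \<le> p-2 \<and> ?L \<le> n - d * ?m \<and> n - d * ?m \<le> (p-2) * ?L"
    using Suc.prems key[OF assms, of k] mp assms
    by (intro digit) (auto simp: algebra_simps)
  then obtain d where d: "1 \<le> d" "d \<le> p-2" "?L \<le> n - d * ?m" "n - d * ?m \<le> (p-2) * ?L" by blast
  obtain a where a: "\<forall>i\<in>{0..k}. a i \<in> {1..p-2}" "n - d * ?m = (\<Sum>i=0..k. a i * metallic p i)"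
    using Suc.IH[OF d(3) d(4)] by blast
  define a' where "a' = a(Suc k := d)"
  have "(\<Sum>i=0..k. a' i * metallic p i) = (\<Sum>i=0..k. a i * metallic p i)"
    unfolding a'_def by (intro sum.cong) auto
  then have "n = (\<Sum>i=0..Suc k. a' i * metallic p i)"
    using a(2) by (simp add: a'_def)
  moreover have "\<forall>i\<in>{0..Suc k}. a' i \<in> {1..p-2}"
    using a(1) d unfolding a'_def by (auto simp: le_Suc_eq)
  ultimately show ?case by blast
qed

lemma upto:
  assumes "p \<ge> 5"
  shows "1 \<le> n \<Longrightarrow> n \<le> (p-2) * (\<Sum>i=0..k. metallic p i) \<Longrightarrow>
    \<exists>(k::nat) (a::nat \<Rightarrow> int). (\<forall>i\<in>{0..k}. a i \<in> {1..p-2}) \<and> n = (\<Sum>i=0..k. a i * metallic p i)"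
proof (induction k arbitrary: n)
  case 0
  then obtain a where "(\<forall>i\<in>{0..0}. a i \<in> {1..p-2}) \<and> n = (\<Sum>i=0..0. a i * metallic p i)"
    using interval[OF assms, of 0 n] by auto
  then show ?case by blast
next
  case (Suc k)
  show ?case
  proof (cases "n \<le> (p-2) * (\<Sum>i=0..k. metallic p i)")
    case True then show ?thesis using Suc by blast
  next
    case False
    have "(\<Sum>i=0..Suc k. metallic p i) \<le> n"
      using key[OF assms, of k] False by (simp add: algebra_simps)
    then show ?thesis using interval[OF assms, of "Suc k" n] Suc.prems by blast
  qed
qed

lemma sum_ge: assumes "p \<ge> 5" shows "(\<Sum>i=0..k. metallic p i) \<ge> int k + 1"
proof -
  have "(\<Sum>i=0..k. (1::int)) \<le> (\<Sum>i=0..k. metallic p i)"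
    using met_pos[OF assms] by (intro sum_mono) auto
  then show ?thesis by simp
qed

theorem theorem4:
  fixes p n :: int
  assumes "p \<ge> 5" and "n > 0"
  shows "\<exists>(k::nat) (a::nat \<Rightarrow> int).
           (\<forall>i\<in>{0..k}. a i \<in> {1..p-2}) \<and> n = (\<Sum>i=0..k. a i * metallic p i)"
proof -
  let ?k = "nat n"
  have "(\<Sum>i=0..?k. metallic p i) \<ge> n" using sum_ge[OF assms(1), of ?k] assms by simp
  moreover have "(\<Sum>i=0..?k. metallic p i) \<ge> 0" using sum_ge[OF assms(1), of ?k] by linarith
  ultimately have "n \<le> (p-2) * (\<Sum>i=0..?k. metallic p i)"
    using assms mult_right_mono[of 1 "p-2" "\<Sum>i=0..?k. metallic p i"] by linarith
  then show ?thesis using upto[OF assms(1)] assms(2) by simp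
qed

end
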